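(* Let $(T,A)$ be a uniform cocycle on a probability space $(\Delta,\mu)$ and, for $\kappa>0$, let $$\omega(\kappa)=\sup_{\mu(U)\le\kappa}\ \sup_{N>0}\int_U\frac1N\ln\|A_N(x)\|_0\,d\mu(x),$$ the first supremum being over measurable sets $U\subset\Delta$ with $\mu(U)\le\kappa$. Then $\lim_{\kappa\to0}\omega(\kappa)=0$.
   Context: A cocycle is a pair $(T,A)$ with $T:\Delta\to\Delta$ and $A:\Delta\to\mathrm{GL}(p,\mathbb{R})$, viewed as the skew product $(x,w)\mapsto(T(x),A(x)w)$; its iterates are $(T^n,A_n)$ with $A_n(x)=A(T^{n-1}(x))\cdots A(x)$. For $B\in\mathrm{GL}(p,\mathbb{R})$, $\|B\|_0=\max\{\|B\|,\|B^{-1}\|\}$. The cocycle is a uniform cocycle if $(\Delta,\mu)$ is a probability space, $\mu$ is a $T$-invariant ergodic measure ($T$ measurable), $A$ is measurable and $\int_\Delta\ln\|A(x)\|_0\,d\mu(x)<\infty$. *)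

theory Defs
  imports "HOL-Probability.Probability"
begin

definition mat_opnorm :: "real^'p^'p \<Rightarrow> real" where
  "mat_opnorm B = onorm (\<lambda>v. B *v v)"

definition norm0 :: "real^'p^'p \<Rightarrow> real" where
  "norm0 B = max (mat_opnorm B) (mat_opnorm (matrix_inv B))"

primrec cocycle_iter :: "('a \<Rightarrow> 'a) \<Rightarrow> ('a \<Rightarrow> real^'p^'p) \<Rightarrow> nat \<Rightarrow> 'a \<Rightarrow> real^'p^'p" where
  "cocycle_iter T A 0 x = mat 1"
| "cocycle_iter T A (Suc n) x = A ((T ^^ n) x) ** cocycle_iter T A n x"

definition ergodic_map :: "'a measure \<Rightarrow> ('a \<Rightarrow> 'a) \<Rightarrow> bool" where
  "ergodic_map M T \<longleftrightarrow>
     T \<in> measurable M M \<and> distr M M T = M \<and>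
     (\<forall>U \<in> sets M. T -` U \<inter> space M = U \<longrightarrow> measure M U = 0 \<or> measure M U = 1)"

definition uniform_cocycle :: "'a measure \<Rightarrow> ('a \<Rightarrow> 'a) \<Rightarrow> ('a \<Rightarrow> real^'p^'p) \<Rightarrow> bool" where
  "uniform_cocycle M T A \<longleftrightarrow>
     prob_space M \<and> ergodic_map M T \<and>
     A \<in> borel_measurable M \<and> (\<forall>x \<in> space M. invertible (A x)) \<and>
     (\<integral>\<^sup>+ x. ennreal (ln (norm0 (A x))) \<partial>M) < \<infinity>"

definition cocycle_omega :: "'a measure \<Rightarrow> ('a \<Rightarrow> 'a) \<Rightarrow> ('a \<Rightarrow> real^'p^'p) \<Rightarrow> real \<Rightarrow> ereal" where
  "cocycle_omega M T A \<kappa> =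
     (SUP U \<in> {U \<in> sets M. measure M U \<le> \<kappa>}. SUP N \<in> {N::nat. N > 0}.
        ereal (\<integral>x\<in>U. (1 / real N) * ln (norm0 (cocycle_iter T A N x)) \<partial>M))"

end

theory Submission
  imports Defs
begin


lemma mat_opnorm_lip:
  fixes B C :: "real^'p^'p"
  shows "mat_opnorm B \<le> mat_opnorm C + real (CARD('p)) * real (CARD('p)) * norm (B - C)"
proof -
  have "mat_opnorm B = onorm (\<lambda>v. C *v v + (B - C) *v v)"
    unfolding mat_opnorm_def by (simp add: matrix_vector_mult_add_rdistrib[symmetric])
  also have "\<dots> \<le> mat_opnorm C + mat_opnorm (B - C)"
    unfolding mat_opnorm_def by (intro onorm_triangle matrix_vector_mul_bounded_linear)
  also have "mat_opnorm (B - C) \<le> real (CARD('p)) * real (CARD('p)) * norm (B - C)"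
    unfolding mat_opnorm_def
  proof (rule onorm_le_matrix_component)
    fix i j
    have "\<bar>(B - C) $ i $ j\<bar> \<le> norm ((B - C) $ i)" by (rule component_le_norm_cart)
    also have "\<dots> \<le> norm (B - C)" by (rule Finite_Cartesian_Product.norm_nth_le)
    finally show "\<bar>(B - C) $ i $ j\<bar> \<le> norm (B - C)" .
  qed
  finally show ?thesis by simp
qed

lemma continuous_mat_opnorm: "continuous_on UNIV (mat_opnorm :: real^'p^'p \<Rightarrow> real)"
proof -
  let ?K = "real (CARD('p)) * real (CARD('p))"
  have "?K-lipschitz_on UNIV (mat_opnorm :: real^'p^'p \<Rightarrow> real)"
  proof (rule lipschitz_onI)
    fix x y :: "real^'p^'p"
    have "mat_opnorm x \<le> mat_opnorm y + ?K * norm (x - y)" by (rule mat_opnorm_lip)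
    moreover have "mat_opnorm y \<le> mat_opnorm x + ?K * norm (y - x)" by (rule mat_opnorm_lip)
    ultimately show "dist (mat_opnorm x) (mat_opnorm y) \<le> ?K * dist x y"
      by (simp add: dist_real_def dist_norm norm_minus_commute abs_le_iff)
  qed simp
  then show ?thesis by (rule lipschitz_on_continuous_on)
qed

lemma continuous_det: "continuous_on S (det :: real^'p^'p \<Rightarrow> real)"
  unfolding det_def by (intro continuous_intros)

lemma continuous_on_if_const: "continuous_on S f \<Longrightarrow> continuous_on S (\<lambda>x. if P then a else f x)"
  by (cases P) auto

definition cinv :: "real^'p^'p \<Rightarrow> real^'p^'p" where
  "cinv B = (\<chi> i k. det (\<chi> r c. if c = i then axis k 1 $ r else B $ r $ c) / det B)"

lemma continuous_cinv: "continuous_on {B. det B \<noteq> 0} (cinv :: real^'p^'p \<Rightarrow> _)"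
  unfolding cinv_def det_def by (intro continuous_intros continuous_on_if_const) (auto simp: det_def)

lemma matrix_inv_right:
  fixes B :: "real^'p^'p"
  assumes "invertible B"
  shows "B ** matrix_inv B = mat 1" "matrix_inv B ** B = mat 1"
  using someI_ex[OF assms[unfolded invertible_def]] unfolding matrix_inv_def by auto

lemma matrix_inv_unique:
  fixes B X :: "real^'p^'p"
  assumes "invertible B" "B ** X = mat 1"
  shows "matrix_inv B = X"
  by (metis assms matrix_inv_right(2) matrix_mul_assoc matrix_mul_lid matrix_mul_rid)

lemma matrix_inv_cinv:
  fixes B :: "real^'p^'p"
  assumes "invertible B"
  shows "matrix_inv B = cinv B"
proof -
  have d: "det B \<noteq> 0" using assms invertible_det_nz by blast
  have "matrix_inv B $ i $ k = cinv B $ i $ k" for i k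
  proof -
    have "B *v (matrix_inv B *v axis k 1) = axis k 1"
      by (simp add: matrix_vector_mul_assoc matrix_inv_right[OF assms])
    then have "matrix_inv B *v axis k 1 = (\<chi> j. det(\<chi> r c. if c=j then axis k 1 $ r else B$r$c) / det B)"
      using cramer[OF d] by blast
    then show ?thesis
      by (simp add: cinv_def matrix_vector_mult_basis column_def vec_eq_iff)
  qed
  then show ?thesis by (simp add: vec_eq_iff)
qed



lemma mat_opnorm_mult:
  fixes B C :: "real^'p^'p"
  shows "mat_opnorm (B ** C) \<le> mat_opnorm B * mat_opnorm C"
proof -
  have "mat_opnorm (B ** C) = onorm ((\<lambda>v. B *v v) \<circ> (\<lambda>v. C *v v))"
    unfolding mat_opnorm_def by (simp add: o_def matrix_vector_mul_assoc)
  also have "\<dots> \<le> mat_opnorm B * mat_opnorm C"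
    unfolding mat_opnorm_def by (intro onorm_compose matrix_vector_mul_bounded_linear)
  finally show ?thesis .
qed

lemma mat_opnorm_nonneg: "0 \<le> mat_opnorm (B :: real^'p^'p)"
  unfolding mat_opnorm_def by (intro onorm_pos_le matrix_vector_mul_bounded_linear)

lemma mat_opnorm_one: "mat_opnorm (mat 1 :: real^'p^'p) = 1"
  proof -
  have e: "((*v) (mat 1 :: real^'p^'p)) = (\<lambda>v. v)" by (simp add: fun_eq_iff)
  have "onorm (\<lambda>v::real^'p. v) = 1" by (rule onorm_id)
  then show ?thesis unfolding mat_opnorm_def e .
qed

lemma norm0_ge1:
  fixes B :: "real^'p^'p"
  assumes "invertible B"
  shows "1 \<le> norm0 B"
proof (rule ccontr)
  assume "\<not> 1 \<le> norm0 B"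
  then have a: "mat_opnorm B < 1" "mat_opnorm (matrix_inv B) < 1" by (auto simp: norm0_def)
  have "1 = mat_opnorm (B ** matrix_inv B)" by (simp add: matrix_inv_right[OF assms] mat_opnorm_one)
  also have "\<dots> \<le> mat_opnorm B * mat_opnorm (matrix_inv B)" by (rule mat_opnorm_mult)
  also have "\<dots> \<le> mat_opnorm B * 1"
    using a mat_opnorm_nonneg[of B] by (intro mult_left_mono) auto
  also have "\<dots> < 1" using a by simp
  finally show False by simp
qed

lemma norm0_one: "norm0 (mat 1 :: real^'p^'p) = 1"
proof -
  have "matrix_inv (mat 1 :: real^'p^'p) = mat 1"
    by (rule matrix_inv_unique) (auto simp: invertible_def)
  then show ?thesis by (simp add: norm0_def mat_opnorm_one)
qed

lemma norm0_mult:
  fixes B C :: "real^'p^'p"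
  assumes "invertible B" "invertible C"
  shows "norm0 (B ** C) \<le> norm0 B * norm0 C"
proof -
  have "matrix_inv (B ** C) = matrix_inv C ** matrix_inv B"
  proof (rule matrix_inv_unique)
    show "invertible (B ** C)" using assms by (rule invertible_mult)
    have "B ** C ** (matrix_inv C ** matrix_inv B) = B ** (C ** matrix_inv C) ** matrix_inv B"
      by (simp add: matrix_mul_assoc)
    then show "B ** C ** (matrix_inv C ** matrix_inv B) = mat 1"
      by (simp add: matrix_inv_right assms)
  qed
  then have i: "mat_opnorm (matrix_inv (B ** C)) \<le> mat_opnorm (matrix_inv C) * mat_opnorm (matrix_inv B)"
    by (simp add: mat_opnorm_mult)
  have m: "mat_opnorm (B ** C) \<le> mat_opnorm B * mat_opnorm C" by (rule mat_opnorm_mult)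
  have n: "0 \<le> mat_opnorm B" "0 \<le> mat_opnorm C" "0 \<le> mat_opnorm (matrix_inv B)" "0 \<le> mat_opnorm (matrix_inv C)"
    by (auto simp: mat_opnorm_nonneg)
  have "mat_opnorm B * mat_opnorm C \<le> norm0 B * norm0 C"
    using n by (intro mult_mono) (auto simp: norm0_def)
  moreover have "mat_opnorm (matrix_inv C) * mat_opnorm (matrix_inv B) \<le> norm0 B * norm0 C"
    using n by (subst mult.commute, intro mult_mono) (auto simp: norm0_def)
  ultimately show ?thesis unfolding norm0_def[of "B ** C"] using i m
    by (intro max.boundedI) linarith+
qed

lemma borel_norm0:
  fixes F :: "'a \<Rightarrow> real^'p^'p"
  assumes F: "F \<in> borel_measurable M" and inv: "\<And>x. x \<in> space M \<Longrightarrow> invertible (F x)"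
  shows "(\<lambda>x. norm0 (F x)) \<in> borel_measurable M"
proof -
  define S where "S = {B :: real^'p^'p. det B \<noteq> 0}"
  define H where "H = (\<lambda>B::real^'p^'p. if B \<in> S then max (mat_opnorm B) (mat_opnorm (cinv B)) else 0)"
  have "open S" unfolding S_def using open_Collect_neq[of det "\<lambda>_. 0", OF continuous_det continuous_on_const] by simp
  then have Sb: "S \<in> sets borel" by auto
  have c1: "continuous_on S mat_opnorm" by (rule continuous_on_subset[OF continuous_mat_opnorm]) simp
  have c2: "continuous_on S (\<lambda>B. mat_opnorm (cinv B))"
    unfolding S_def by (rule continuous_on_compose2[OF continuous_mat_opnorm continuous_cinv]) simp
  have "continuous_on S (\<lambda>B. max (mat_opnorm B) (mat_opnorm (cinv B)))"
    using c1 c2 by (rule continuous_on_max)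
  then have "H \<in> borel_measurable borel"
    unfolding H_def by (rule borel_measurable_continuous_on_if[OF Sb _ continuous_on_const])
  then have Hm: "(\<lambda>x. H (F x)) \<in> borel_measurable M"
    using measurable_comp[OF F] by (simp add: comp_def)
  have eq: "\<And>x. x \<in> space M \<Longrightarrow> H (F x) = norm0 (F x)"
    using inv by (simp add: H_def S_def norm0_def matrix_inv_cinv invertible_det_nz)
  show ?thesis using measurable_cong[of M "\<lambda>x. H (F x)" "\<lambda>x. norm0 (F x)" borel] eq Hm by blast
qed



lemma funpow_measurable: "T \<in> measurable M M \<Longrightarrow> (T ^^ i) \<in> measurable M M"
  by (induction i) (auto intro: measurable_comp)

lemma funpow_distr:
  assumes "T \<in> measurable M M" "distr M M T = M"
  shows "distr M M (T ^^ i) = M"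
proof (induction i)
  case 0 then show ?case by (simp add: distr_id2)
next
  case (Suc i)
  have "distr M M (T ^^ Suc i) = distr (distr M M (T ^^ i)) M T"
    by (simp add: distr_distr[OF assms(1) funpow_measurable[OF assms(1)]])
  then show ?case using Suc.IH assms(2) by (simp only:)
qed

lemma cocycle_bound:
  fixes A :: "'a \<Rightarrow> real^'p^'p"
  assumes T: "T \<in> measurable M M" and inv: "\<And>x. x \<in> space M \<Longrightarrow> invertible (A x)"
  assumes x: "x \<in> space M"
  shows "invertible (cocycle_iter T A n x) \<and>
    ln (norm0 (cocycle_iter T A n x)) \<le> (\<Sum>i<n. ln (norm0 (A ((T ^^ i) x))))"
proof (induction n)
  case 0
  have "invertible (mat 1 :: real^'p^'p)" by (auto simp: invertible_def)
  then show ?case by (simp add: norm0_one)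
next
  case (Suc n)
  let ?C = "cocycle_iter T A n x"
  have tx: "(T ^^ n) x \<in> space M" using measurable_space[OF funpow_measurable[OF T] x] .
  have ia: "invertible (A ((T ^^ n) x))" using inv[OF tx] .
  have ic: "invertible ?C" using Suc by blast
  have p1: "1 \<le> norm0 (A ((T ^^ n) x))" using norm0_ge1[OF ia] .
  have p2: "1 \<le> norm0 ?C" using norm0_ge1[OF ic] .
  have p3: "1 \<le> norm0 (A ((T ^^ n) x) ** ?C)" using norm0_ge1[OF invertible_mult[OF ia ic]] .
  have "ln (norm0 (A ((T ^^ n) x) ** ?C)) \<le> ln (norm0 (A ((T ^^ n) x)) * norm0 ?C)"
    using norm0_mult[OF ia ic] p3 by (subst ln_le_cancel_iff) auto
  also have "\<dots> = ln (norm0 (A ((T ^^ n) x))) + ln (norm0 ?C)"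
    using p1 p2 by (simp add: ln_mult)
  finally show ?case using Suc invertible_mult[OF ia ic] by simp
qed



theorem lemma2p2:
  fixes M :: "'a measure" and T :: "'a \<Rightarrow> 'a" and A :: "'a \<Rightarrow> real^'p^'p"
  assumes "uniform_cocycle M T A"
  shows "((\<lambda>\<kappa>. cocycle_omega M T A \<kappa>) \<longlongrightarrow> 0) (at_right 0)"
proof -
  have P: "prob_space M" and T: "T \<in> measurable M M" and D: "distr M M T = M"
    and Am: "A \<in> borel_measurable M" and inv: "\<And>x. x \<in> space M \<Longrightarrow> invertible (A x)"
    and fin: "(\<integral>\<^sup>+ x. ennreal (ln (norm0 (A x))) \<partial>M) < \<infinity>"
    using assms by (auto simp: uniform_cocycle_def ergodic_map_def)
  interpret prob_space M by (rule P)
  define g where "g x = ln (norm0 (A x))" for x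
  have n0m: "(\<lambda>x. norm0 (A x)) \<in> borel_measurable M" by (rule borel_norm0[OF Am inv])
  have gm[measurable]: "g \<in> borel_measurable M" unfolding g_def using n0m by measurable
  have g0: "0 \<le> g x" if "x \<in> space M" for x
    unfolding g_def using norm0_ge1[OF inv[OF that]] by simp
  have gi: "integrable M g"
    by (rule integrableI_nonneg) (use gm g0 fin in \<open>auto simp: g_def\<close>)
  define E where "E K = (\<integral>x. max (g x - K) 0 \<partial>M)" for K :: real
  have Ei: "integrable M (\<lambda>x. max (g x - K) 0)" for K
    using gi by auto
  have inv_int: "(\<integral>x. max (g ((T ^^ i) x) - K) 0 \<partial>M) = E K" for i K
  proof -
    have "(\<integral>x. max (g x - K) 0 \<partial>distr M M (T ^^ i)) = (\<integral>x. max (g ((T ^^ i) x) - K) 0 \<partial>M)"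
      by (rule integral_distr[OF funpow_measurable[OF T]]) measurable
    then show ?thesis using funpow_distr[OF T D] by (simp add: E_def)
  qed
  have inv_integrable: "integrable M (\<lambda>x. max (g ((T ^^ i) x) - K) 0)" for i K
  proof -
    have "integrable (distr M M (T ^^ i)) (\<lambda>x. max (g x - K) 0)"
      using funpow_distr[OF T D] Ei by simp
    then show ?thesis
      by (subst integrable_distr_eq[OF funpow_measurable[OF T], symmetric]) measurable
  qed
  have E0: "0 \<le> E K" for K unfolding E_def by (intro integral_nonneg_AE) auto
  have bound: "(\<integral>x\<in>U. (1 / real N) * ln (norm0 (cocycle_iter T A N x)) \<partial>M) \<le> K * measure M U + E K"
    if U: "U \<in> sets M" and N: "N > 0" and K: "0 \<le> K" for U N K
  proof -
    define R where "R x = K * indicator U x + (1 / real N) * (\<Sum>i<N. max (g ((T ^^ i) x) - K) 0)" for x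
    have i1: "integrable M (indicator U :: _ \<Rightarrow> real)"
      using U by (intro integrable_real_indicator) (auto simp: less_top[symmetric])
    have i2: "integrable M (\<lambda>x. \<Sum>i<N. max (g ((T ^^ i) x) - K) 0)"
      by (rule Bochner_Integration.integrable_sum) (rule inv_integrable)
    have Ri: "integrable M R"
      unfolding R_def by (rule Bochner_Integration.integrable_add[OF integrable_mult_right[OF i1] integrable_mult_right[OF i2]])
    have R0: "0 \<le> R x" for x
      unfolding R_def using K by (intro add_nonneg_nonneg mult_nonneg_nonneg sum_nonneg) auto
    have le: "indicator U x *\<^sub>R ((1 / real N) * ln (norm0 (cocycle_iter T A N x))) \<le> R x"
      if x: "x \<in> space M" for x
    proof (cases "x \<in> U")
      case False then show ?thesis using R0 by simp
    next
      case True
      have "ln (norm0 (cocycle_iter T A N x)) \<le> (\<Sum>i<N. g ((T ^^ i) x))"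
        using cocycle_bound[where A=A and M=M and T=T and x=x and n=N, OF T inv x] by (simp add: g_def)
      also have "\<dots> \<le> (\<Sum>i<N. K + max (g ((T ^^ i) x) - K) 0)"
        by (intro sum_mono) auto
      also have "\<dots> = real N * K + (\<Sum>i<N. max (g ((T ^^ i) x) - K) 0)"
        by (simp add: sum.distrib)
      finally have "(1 / real N) * ln (norm0 (cocycle_iter T A N x))
          \<le> (1 / real N) * (real N * K + (\<Sum>i<N. max (g ((T ^^ i) x) - K) 0))"
        using N by (intro mult_left_mono) auto
      also have "\<dots> = R x" using N True by (simp add: R_def field_simps)
      finally show ?thesis using True by simp
    qed
    have "(\<integral>x\<in>U. (1 / real N) * ln (norm0 (cocycle_iter T A N x)) \<partial>M) \<le> (\<integral>x. R x \<partial>M)"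
      unfolding set_lebesgue_integral_def by (rule integral_mono'[OF Ri le R0])
    also have "(\<integral>x. R x \<partial>M) = (\<integral>x. K * indicator U x \<partial>M) + (\<integral>x. (1 / real N) * (\<Sum>i<N. max (g ((T ^^ i) x) - K) 0) \<partial>M)"
      unfolding R_def by (rule Bochner_Integration.integral_add[OF integrable_mult_right[OF i1] integrable_mult_right[OF i2]])
    also have "(\<integral>x. (1 / real N) * (\<Sum>i<N. max (g ((T ^^ i) x) - K) 0) \<partial>M) = (1 / real N) * (\<Sum>i<N. E K)"
      unfolding integral_mult_right_zero
      by (simp only: Bochner_Integration.integral_sum[of "{..<N}" M "\<lambda>i x. max (g ((T ^^ i) x) - K) 0", OF inv_integrable] inv_int)
    also have "(\<integral>x. K * indicator U x \<partial>M) = K * measure M U"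
      using U by simp
    also have "K * measure M U + (1 / real N) * (\<Sum>i<N. E K) = K * measure M U + E K" using N by simp
    finally show ?thesis .
  qed
  have Elim: "(E \<longlongrightarrow> 0) at_top"
  proof -
    have "((\<lambda>t. \<integral>x. max (g x - t) 0 \<partial>M) \<longlongrightarrow> (\<integral>x. 0 \<partial>M)) at_top"
    proof (rule integral_dominated_convergence_at_top[where w=g])
      show "(\<lambda>x. 0::real) \<in> borel_measurable M" by simp
      show "(\<lambda>x. max (g x - t) 0) \<in> borel_measurable M" for t by measurable
      show "integrable M g" by (rule gi)
      show "AE x in M. ((\<lambda>t. max (g x - t) 0) \<longlongrightarrow> 0) at_top"
      proof (rule AE_I2)
        fix x
        have "eventually (\<lambda>t. max (g x - t) 0 = 0) at_top"
          using eventually_ge_at_top[of "g x"] by eventually_elim auto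
        then show "((\<lambda>t. max (g x - t) 0) \<longlongrightarrow> 0) at_top" by (rule tendsto_eventually)
      qed
      show "\<forall>\<^sub>F t in at_top. AE x in M. norm (max (g x - t) 0) \<le> g x"
        using eventually_ge_at_top[of "0::real"]
      proof eventually_elim
        case (elim t)
        show ?case using g0 elim by (intro AE_I2) auto
      qed
    qed
    then show ?thesis by (simp add: E_def[abs_def])
  qed
  have om0: "0 \<le> cocycle_omega M T A \<kappa>" if "0 < \<kappa>" for \<kappa>
  proof -
    have "0 \<le> ereal (\<integral>x\<in>{}. (1 / real 1) * ln (norm0 (cocycle_iter T A 1 x)) \<partial>M)"
      by (simp add: set_lebesgue_integral_def)
    also have "\<dots> \<le> (SUP N \<in> {N::nat. N > 0}. ereal (\<integral>x\<in>{}. (1 / real N) * ln (norm0 (cocycle_iter T A N x)) \<partial>M))"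
      by (rule SUP_upper) simp
    also have "\<dots> \<le> cocycle_omega M T A \<kappa>"
      unfolding cocycle_omega_def using that by (intro SUP_upper) auto
    finally show ?thesis .
  qed
  have omle: "cocycle_omega M T A \<kappa> \<le> ereal (K * \<kappa> + E K)" if "0 < \<kappa>" "0 \<le> K" for \<kappa> K
    unfolding cocycle_omega_def
  proof (intro SUP_least)
    fix U N assume U: "U \<in> {U \<in> sets M. measure M U \<le> \<kappa>}" and N: "N \<in> {N::nat. N > 0}"
    have "(\<integral>x\<in>U. (1 / real N) * ln (norm0 (cocycle_iter T A N x)) \<partial>M) \<le> K * measure M U + E K"
      using U N that by (intro bound) auto
    also have "\<dots> \<le> K * \<kappa> + E K" using U that by (auto intro: mult_left_mono)
    finally show "ereal (\<integral>x\<in>U. (1 / real N) * ln (norm0 (cocycle_iter T A N x)) \<partial>M) \<le> ereal (K * \<kappa> + E K)"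
      by simp
  qed
  show ?thesis
  proof (rule order_tendstoI)
    fix a :: ereal assume "a < 0"
    show "\<forall>\<^sub>F \<kappa> in at_right 0. a < cocycle_omega M T A \<kappa>"
      by (rule eventually_at_rightI[of 0 1]) (use om0 \<open>a < 0\<close> in \<open>auto intro: less_le_trans\<close>)
  next
    fix a :: ereal assume "0 < a"
    then obtain e where e: "0 < ereal e" "ereal e < a" using ereal_dense2 by blast
    then have e0: "0 < e" by simp
    have "\<forall>\<^sub>F K in at_top. E K < e / 2" using order_tendstoD(2)[OF Elim, of "e / 2"] e0 by simp
    then obtain K0 where K0: "\<And>K. K \<ge> K0 \<Longrightarrow> E K < e / 2" by (auto simp: eventually_at_top_linorder)
    define K where "K = max K0 0"
    have K: "0 \<le> K" "E K < e / 2" using K0 by (auto simp: K_def)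
    define d where "d = e / (2 * (K + 1))"
    have d0: "0 < d" using e0 K by (simp add: d_def)
    show "\<forall>\<^sub>F \<kappa> in at_right 0. cocycle_omega M T A \<kappa> < a"
    proof (rule eventually_at_rightI[OF _ d0])
      fix \<kappa> :: real assume "\<kappa> \<in> {0<..<d}"
      then have k: "0 < \<kappa>" "\<kappa> < d" by auto
      have "K * \<kappa> \<le> K * d" using K k by (intro mult_left_mono) auto
      also have "K * d \<le> e / 2" using K e0 by (simp add: d_def field_simps)
      finally have "K * \<kappa> + E K < e" using K by simp
      then have "cocycle_omega M T A \<kappa> < ereal e"
        using omle[OF k(1) K(1)] by (meson ereal_less_eq(3) le_less_trans less_ereal.simps(1))
      then show "cocycle_omega M T A \<kappa> < a" using e by (meson less_trans)
    qed
  qed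
qed

end
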